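(* Assume that $\mathbb{E}[\bar{w}_k] = 0$ and $\mathbb{E}[\| \bar{w}_k \|^4] \leq \bar{\sigma}_4$ for all $k\in \mathbb{N}$. Suppose that the feedback gain $K$ and observer gain $L$ are chosen such that $\|\bar{A}_{KL}\| = \bar{\rho}_K <1$. Then the variance of the random variable \begin{align*} G^{KL}(\bar{x}) &= \bar{x}^{\rm{T}} \bar{P} \bar{x} + 2 \sum_{k = 0 }^{\infty} \gamma^{k+1} \bar{w}_k^{\rm{T}} \bar{P} \bar{A}_{KL}^{k+1}\bar{x} + \sum_{k = 0 }^{\infty} \gamma^{k+1} \bar{w}_k^{\rm{T}} \bar{P} \bar{w}_k \\ &\quad + 2 \sum_{k = 1 }^{\infty} \gamma^{k+1} \bar{w}_k^{\rm{T}} \bar{P} \sum_{\tau=0}^{k-1} \bar{A}_{KL}^{k-\tau}\bar{w}_{\tau} \end{align*} is bounded.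
   Context: Partially observable system $x_{t+1}=A x_t + B u_t + v_t$, $y_t = C x_t + s_t$ with estimator $\hat{x}_{t+1} = A \hat{x}_t + B u_t + L(y_t - C \hat{x}_t)$ and controller $u_t = K\hat{x}_t$. With $\tilde{x}_t = x_t-\hat{x}_t$ and $\bar{x}_t = [x_t^{\rm{T}}, \tilde{x}_t^{\rm{T}}]^{\rm{T}}$, the augmented dynamics are $\bar{x}_{t+1} = \bar{A}_{KL}\bar{x}_t + \bar{v}_t$, $\bar{A}_{KL} = \begin{bmatrix} A+BK & -BK \\ 0 & A-LC\end{bmatrix}$, $\bar{v}_t = \begin{bmatrix} I & 0 \\ I & -L\end{bmatrix}\begin{bmatrix} v_t \\ s_t\end{bmatrix}$, i.i.d. with distribution $\bar{\mathcal{D}}$. $Q,R>0$, $\gamma\in(0,1)$, $\bar{Q}_K=\begin{bmatrix} Q + K^{\rm{T}} R K & -K^{\rm{T}} R K \\ -K^{\rm{T}} R K & K^{\rm{T}} R K \end{bmatrix}$, and $\bar{P}$ solves $\bar{P} = \bar{Q}_K + \gamma \bar{A}_{KL}^{\rm{T}} \bar{P} \bar{A}_{KL}$. The $\bar{w}_k\sim\bar{\mathcal{D}}$ are mutually independent; $\bar{x}$ is the augmented initial state. This random variable is the fixed point of the distributional Bellman equation for the return $\sum_t \gamma^t \bar{x}_t^{\rm{T}}\bar{Q}_K\bar{x}_t$. $\|\cdot\|$ is the spectral norm. *)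

theory Defs
  imports "HOL-Analysis.Analysis" "HOL-Probability.Probability"
begin

primrec matpow :: "real^'n^'n \<Rightarrow> nat \<Rightarrow> real^'n^'n" where
  "matpow A 0 = mat 1"
| "matpow A (Suc k) = A ** matpow A k"

definition pos_def_mat :: "real^'n^'n \<Rightarrow> bool" where
  "pos_def_mat Q \<longleftrightarrow> transpose Q = Q \<and> (\<forall>x. x \<noteq> 0 \<longrightarrow> x \<bullet> (Q *v x) > 0)"

definition spec_norm :: "real^'n^'m \<Rightarrow> real" where
  "spec_norm M = onorm (\<lambda>x. M *v x)"

definition block2 :: "real^'n^'n \<Rightarrow> real^'n^'n \<Rightarrow> real^'n^'n \<Rightarrow> real^'n^'n \<Rightarrow> real^('n+'n)^('n+'n)" where
  "block2 M11 M12 M21 M22 = (\<chi> i j. case i of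
      Inl a \<Rightarrow> (case j of Inl b \<Rightarrow> M11 $ a $ b | Inr b \<Rightarrow> M12 $ a $ b)
    | Inr a \<Rightarrow> (case j of Inl b \<Rightarrow> M21 $ a $ b | Inr b \<Rightarrow> M22 $ a $ b))"

definition A_KL :: "real^'n^'n \<Rightarrow> real^'m^'n \<Rightarrow> real^'n^'p \<Rightarrow> real^'n^'m \<Rightarrow> real^'p^'n
    \<Rightarrow> real^('n+'n)^('n+'n)" where
  "A_KL A B C K L = block2 (A + B ** K) (- (B ** K)) 0 (A - L ** C)"

definition Q_K :: "real^'n^'n \<Rightarrow> real^'m^'m \<Rightarrow> real^'n^'m \<Rightarrow> real^('n+'n)^('n+'n)" where
  "Q_K Q R K = block2 (Q + transpose K ** R ** K) (- (transpose K ** R ** K))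
                      (- (transpose K ** R ** K)) (transpose K ** R ** K)"

text \<open>Augmented noise [[I,0],[I,-L]] (v,s) = (v, v - L s).\<close>
definition vbar :: "real^'p^'n \<Rightarrow> real^'n \<Rightarrow> real^'p \<Rightarrow> real^('n+'n)" where
  "vbar L v s = (\<chi> i. case i of Inl a \<Rightarrow> v $ a | Inr a \<Rightarrow> (v - L *v s) $ a)"

definition G_KL :: "real \<Rightarrow> real^('n::finite+'n)^('n+'n) \<Rightarrow> real^('n+'n)^('n+'n) \<Rightarrow> real^('n+'n)
    \<Rightarrow> (nat \<Rightarrow> real^('n+'n)) \<Rightarrow> real" where
  "G_KL \<gamma> Abar Pbar xbar w =
     xbar \<bullet> (Pbar *v xbar)
     + 2 * (\<Sum>k. \<gamma>^(k+1) * (w k \<bullet> (Pbar *v (matpow Abar (k+1) *v xbar))))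
     + (\<Sum>k. \<gamma>^(k+1) * (w k \<bullet> (Pbar *v w k)))
     + 2 * (\<Sum>k. \<gamma>^(k+1) * (w k \<bullet> (Pbar *v (\<Sum>\<tau><k. matpow Abar (k - \<tau>) *v w \<tau>))))"

end

theory Submission
  imports Defs
begin

lemma matpow_norm_le:
  fixes A :: "real^'n^'n"
  assumes "spec_norm A \<le> 1"
  shows "norm (matpow A k *v x) \<le> norm x"
proof (induction k)
  case 0 then show ?case by simp
next
  case (Suc k)
  have "norm (matpow A (Suc k) *v x) = norm (A *v (matpow A k *v x))"
    by (simp add: matrix_vector_mul_assoc)
  also have "\<dots> \<le> spec_norm A * norm (matpow A k *v x)"
    unfolding spec_norm_def by (rule onorm) simp
  also have "\<dots> \<le> 1 * norm (matpow A k *v x)"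
    by (rule mult_right_mono[OF assms]) simp
  also have "\<dots> \<le> norm x" using Suc by simp
  finally show ?case .
qed

lemma inner_P_bound:
  fixes P :: "real^'n^'n"
  shows "\<bar>w \<bullet> (P *v y)\<bar> \<le> norm w * (onorm (\<lambda>y. P *v y) * norm y)"
proof -
  have "\<bar>w \<bullet> (P *v y)\<bar> \<le> norm w * norm (P *v y)" by (rule Cauchy_Schwarz_ineq2)
  also have "\<dots> \<le> norm w * (onorm (\<lambda>y. P *v y) * norm y)"
    by (rule mult_left_mono) (auto intro: onorm)
  finally show ?thesis .
qed

lemma summable_poly_geom:
  fixes \<gamma> :: real
  assumes "0 < \<gamma>" "\<gamma> < 1"
  shows "summable (\<lambda>k. \<gamma>^k * (real k + 1)^2)"
proof (rule ratio_test_convergence)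
  show "eventually (\<lambda>n. \<gamma>^n * (real n + 1)^2 > 0) sequentially"
    using assms by (auto intro!: always_eventually)
  have e: "\<gamma>^n * (real n + 1)^2 / (\<gamma>^Suc n * (real (Suc n) + 1)^2) = ((real n + 1)/(real n + 2))^2 / \<gamma>" for n
  proof -
    have "\<gamma>^Suc n * (real (Suc n) + 1)^2 = \<gamma>^n * (\<gamma> * (real n + 2)^2)" by (simp add: algebra_simps)
    hence "\<gamma>^n * (real n + 1)^2 / (\<gamma>^Suc n * (real (Suc n) + 1)^2) = (real n + 1)^2 / (\<gamma> * (real n + 2)^2)"
      using assms by simp
    also have "\<dots> = ((real n + 1)/(real n + 2))^2 / \<gamma>" by (simp add: power_divide)
    finally show ?thesis .
  qed
  have t: "(\<lambda>n. (real n + 1)/(real n + 2)) \<longlonglongrightarrow> 1"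
  proof -
    have "(\<lambda>n. of_nat n / of_nat (Suc n) :: real) \<longlonglongrightarrow> 1" by (rule LIMSEQ_n_over_Suc_n)
    from LIMSEQ_Suc[OF this] show ?thesis by (simp add: add_ac)
  qed
  have "(\<lambda>n. ((real n + 1)/(real n + 2))^2 / \<gamma>) \<longlonglongrightarrow> 1^2/\<gamma>"
    by (intro tendsto_intros t) (use assms in auto)
  hence "(\<lambda>n. ereal (\<gamma>^n * (real n + 1)^2 / (\<gamma>^Suc n * (real (Suc n) + 1)^2))) \<longlonglongrightarrow> ereal (1/\<gamma>)"
    unfolding e by (intro tendsto_ereal) simp
  hence "liminf (\<lambda>n. ereal (\<gamma>^n * (real n + 1)^2 / (\<gamma>^Suc n * (real (Suc n) + 1)^2))) = ereal (1/\<gamma>)"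
    by (intro lim_imp_Liminf) auto
  moreover have "ereal (1/\<gamma>) > 1" using assms by simp
  ultimately show "liminf (\<lambda>n. ereal (\<gamma>^n * (real n + 1)^2 / (\<gamma>^Suc n * (real (Suc n) + 1)^2))) > 1" by simp
qed

lemma finite_CS_geom:
  fixes \<gamma> :: real
  assumes "0 < \<gamma>"
  shows "(\<Sum>k<n. \<gamma>^k * g k)^2 \<le> (\<Sum>k<n. \<gamma>^k) * (\<Sum>k<n. \<gamma>^k * (g k)^2)"
proof -
  have "(\<Sum>k<n. \<gamma>^k * g k)^2 = (\<Sum>k<n. sqrt (\<gamma>^k) * (sqrt (\<gamma>^k) * g k))^2"
    using assms by (simp add: mult.assoc[symmetric])
  also have "\<dots> \<le> (\<Sum>k<n. (sqrt (\<gamma>^k))^2) * (\<Sum>k<n. (sqrt (\<gamma>^k) * g k)^2)"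
    by (rule Cauchy_Schwarz_ineq_sum)
  also have "\<dots> = (\<Sum>k<n. \<gamma>^k) * (\<Sum>k<n. \<gamma>^k * (g k)^2)"
    using assms by (simp add: power_mult_distrib)
  finally show ?thesis .
qed

lemma geom_partial_le:
  fixes \<gamma> :: real
  assumes "0 < \<gamma>" "\<gamma> < 1"
  shows "(\<Sum>k<n. \<gamma>^k) \<le> 1/(1-\<gamma>)"
proof -
  have "(\<Sum>k<n. \<gamma>^k) \<le> (\<Sum>k. \<gamma>^k)"
    using assms by (intro sum_le_suminf summable_geometric) auto
  also have "\<dots> = 1/(1-\<gamma>)" using assms by (simp add: suminf_geometric)
  finally show ?thesis .
qed

lemma sq_sum_le:
  fixes c :: "nat \<Rightarrow> real"
  shows "(\<Sum>t<k. c t)^2 \<le> real k * (\<Sum>t<k. (c t)^2)"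
  using Cauchy_Schwarz_ineq_sum[of "\<lambda>_. 1" c "{..<k}"] by simp

lemma three_sq: "((a::real) + b + c)^2 \<le> 3 * (a^2 + b^2 + c^2)"
proof -
  have "3 * (a^2 + b^2 + c^2) - (a + b + c)^2 = (a - b)^2 + (b - c)^2 + (a - c)^2"
    by (simp add: power2_eq_square algebra_simps)
  moreover have "0 \<le> (a - b)^2 + (b - c)^2 + (a - c)^2" by simp
  ultimately show ?thesis by linarith
qed


lemma g_sq_bound:
  fixes U :: "nat \<Rightarrow> real"
  assumes U0: "\<And>t. 0 \<le> U t" and X0: "0 \<le> X"
  shows "(U k * (X + U k + (\<Sum>t<k. U t)))^2
     \<le> 3 * (real k + 1) * (X^2 + (X^2 + 1 + real k) * U k ^ 4 + (\<Sum>t<k. U t ^ 4))"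
proof -
  define S where "S = (\<Sum>t<k. U k * U t)"
  define T where "T = (\<Sum>t<k. U t ^ 4)"
  define Z where "Z = U k ^ 4"
  have T0: "0 \<le> T" unfolding T_def by (intro sum_nonneg) simp
  have Z0: "0 \<le> Z" unfolding Z_def by simp
  have eq: "U k * (X + U k + (\<Sum>t<k. U t)) = U k * X + U k ^ 2 + S"
    by (simp add: S_def sum_distrib_left algebra_simps power2_eq_square)
  have h1: "(U k * X + U k ^ 2 + S)^2 \<le> 3 * ((U k * X)^2 + (U k ^ 2)^2 + S^2)" by (rule three_sq)
  have h2: "S^2 \<le> real k * (\<Sum>t<k. (U k * U t)^2)" unfolding S_def by (rule sq_sum_le)
  have h3: "(\<Sum>t<k. (U k * U t)^2) \<le> (\<Sum>t<k. Z + U t ^ 4)"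
  proof (rule sum_mono)
    fix t
    have e: "(U k ^ 2 - U t ^ 2)^2 = U k ^ 4 + U t ^ 4 - 2 * (U k * U t)^2"
      by (simp add: power2_diff power_mult_distrib flip: power_mult)
    have "0 \<le> (U k ^ 2 - U t ^ 2)^2" by simp
    hence "2 * (U k * U t)^2 \<le> U k ^ 4 + U t ^ 4" unfolding e by linarith
    moreover have "0 \<le> (U k * U t)^2" by simp
    ultimately show "(U k * U t)^2 \<le> Z + U t ^ 4" unfolding Z_def by linarith
  qed
  have h4: "(\<Sum>t<k. Z + U t ^ 4) = real k * Z + T" by (simp add: T_def sum.distrib)
  have h5: "S^2 \<le> real k * (real k * Z + T)"
  proof -
    have "real k * (\<Sum>t<k. (U k * U t)^2) \<le> real k * (\<Sum>t<k. Z + U t ^ 4)"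
      by (rule mult_left_mono[OF h3]) simp
    with h2 h4 show ?thesis by simp
  qed
  have h6: "(U k * X)^2 \<le> X^2 * (1 + Z)"
  proof -
    have e: "(U k ^ 2 - 1)^2 = Z - 2 * U k ^ 2 + 1"
      by (simp add: Z_def power2_diff flip: power_mult)
    have "0 \<le> (U k ^ 2 - 1)^2" by simp
    hence "U k ^ 2 \<le> 1 + Z" unfolding e using zero_le_power2[of "U k"] by linarith
    hence "X^2 * U k ^ 2 \<le> X^2 * (1 + Z)" by (rule mult_left_mono) simp
    thus ?thesis by (simp add: power_mult_distrib mult.commute)
  qed
  have h7: "(U k ^ 2)^2 = Z" by (simp add: Z_def flip: power_mult)
  have h8: "(U k * X + U k ^ 2 + S)^2 \<le> 3 * (X^2 * (1 + Z) + Z + real k * (real k * Z + T))"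
  proof -
    have "(U k * X)^2 + (U k ^ 2)^2 + S^2 \<le> X^2 * (1 + Z) + Z + real k * (real k * Z + T)"
      by (rule add_mono[OF add_mono[OF h6 eq_refl[OF h7]] h5])
    hence "3 * ((U k * X)^2 + (U k ^ 2)^2 + S^2) \<le> 3 * (X^2 * (1 + Z) + Z + real k * (real k * Z + T))"
      by simp
    with h1 show ?thesis by (rule order_trans)
  qed
  have e2: "3 * (real k + 1) * (X^2 + (X^2 + 1 + real k) * Z + T) - 3 * (X^2 * (1 + Z) + Z + real k * (real k * Z + T))
      = 3 * (real k * X^2) + 3 * (real k * (X^2 * Z)) + 6 * (real k * Z) + 3 * T"
    by (simp add: algebra_simps)
  have "0 \<le> 3 * (real k * X^2) + 3 * (real k * (X^2 * Z)) + 6 * (real k * Z) + 3 * T"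
    using Z0 T0 by (intro add_nonneg_nonneg) auto
  hence "3 * (X^2 * (1 + Z) + Z + real k * (real k * Z + T)) \<le> 3 * (real k + 1) * (X^2 + (X^2 + 1 + real k) * Z + T)"
    using e2 by linarith
  with h8 have "(U k * X + U k ^ 2 + S)^2 \<le> 3 * (real k + 1) * (X^2 + (X^2 + 1 + real k) * Z + T)"
    by (rule order_trans)
  thus ?thesis unfolding eq Z_def T_def .
qed

lemma abs_le_one_plus_sq: "\<bar>x::real\<bar> \<le> 1 + x^2"
proof -
  have "0 \<le> (\<bar>x\<bar> - 1)^2" by simp
  moreover have "(\<bar>x\<bar> - 1)^2 = x^2 - 2 * \<bar>x\<bar> + 1" by (simp add: power2_diff)
  moreover have "0 \<le> \<bar>x\<bar>" by simp
  ultimately show ?thesis by linarith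
qed

lemma gamma_term_bound:
  fixes \<gamma> :: real
  assumes "0 < \<gamma>" "\<gamma> < 1" "\<bar>z\<bar> \<le> c * G"
  shows "\<bar>\<gamma>^(k+1) * z\<bar> \<le> c * (\<gamma>^k * G)"
proof -
  have "\<bar>\<gamma>^(k+1) * z\<bar> = \<gamma>^(k+1) * \<bar>z\<bar>" using assms by (simp add: abs_mult)
  also have "\<dots> \<le> \<gamma>^(k+1) * (c * G)" using assms by (intro mult_left_mono) auto
  also have "\<dots> \<le> \<gamma>^k * (c * G)"
  proof (rule mult_right_mono)
    show "\<gamma>^(k+1) \<le> \<gamma>^k" using assms by (simp add: power_decreasing)
    show "0 \<le> c * G" using assms by linarith
  qed
  finally show ?thesis by (simp add: algebra_simps)
qed

lemma mv_meas[measurable]: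
  fixes A :: "real^'n^'m"
  assumes [measurable]: "f \<in> borel_measurable M"
  shows "(\<lambda>x. A *v f x) \<in> borel_measurable M"
proof -
  have "(*v) A \<in> borel_measurable borel"
    by (intro borel_measurable_continuous_onI linear_continuous_on matrix_vector_mul_bounded_linear)
  from measurable_compose[OF assms this] show ?thesis .
qed

theorem corollary2:
  fixes M :: "'a measure"
    and A :: "real^'n^'n" and B :: "real^'m^'n" and C :: "real^'n^'p"
    and K :: "real^'n^'m" and L :: "real^'p^'n"
    and Q :: "real^'n^'n" and R :: "real^'m^'m" and \<gamma> :: real
    and Pbar :: "real^('n+'n)^('n+'n)" and xbar :: "real^('n+'n)"
    and v :: "nat \<Rightarrow> 'a \<Rightarrow> real^'n" and s :: "nat \<Rightarrow> 'a \<Rightarrow> real^'p"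
    and \<sigma>4 :: real and \<rho> :: real
  defines "w \<equiv> (\<lambda>k \<omega>. vbar L (v k \<omega>) (s k \<omega>))"
  assumes "prob_space M"
    and iid_indep: "prob_space.indep_vars M (\<lambda>_. borel) (\<lambda>k \<omega>. (v k \<omega>, s k \<omega>)) UNIV"
    and iid_dist: "\<forall>k. distr M borel (\<lambda>\<omega>. (v k \<omega>, s k \<omega>)) = distr M borel (\<lambda>\<omega>. (v 0 \<omega>, s 0 \<omega>))"
    and mean0: "\<forall>k. prob_space.expectation M (w k) = 0"
    and fourth_int: "\<forall>k. integrable M (\<lambda>\<omega>. norm (w k \<omega>) ^ 4)"
    and fourth: "\<forall>k. prob_space.expectation M (\<lambda>\<omega>. norm (w k \<omega>) ^ 4) \<le> \<sigma>4"
    and "pos_def_mat Q" and "pos_def_mat R"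
    and "0 < \<gamma>" and "\<gamma> < 1"
    and rho: "spec_norm (A_KL A B C K L) = \<rho>" and "\<rho> < 1"
    and lyap: "Pbar = Q_K Q R K + \<gamma> *\<^sub>R (transpose (A_KL A B C K L) ** Pbar ** A_KL A B C K L)"
  shows "(AE \<omega> in M.
            summable (\<lambda>k. \<gamma>^(k+1) * (w k \<omega> \<bullet> (Pbar *v (matpow (A_KL A B C K L) (k+1) *v xbar))))
          \<and> summable (\<lambda>k. \<gamma>^(k+1) * (w k \<omega> \<bullet> (Pbar *v w k \<omega>)))
          \<and> summable (\<lambda>k. \<gamma>^(k+1) * (w k \<omega> \<bullet> (Pbar *v (\<Sum>\<tau><k. matpow (A_KL A B C K L) (k - \<tau>) *v w \<tau> \<omega>)))))
       \<and> integrable M (\<lambda>\<omega>. G_KL \<gamma> (A_KL A B C K L) Pbar xbar (\<lambda>k. w k \<omega>))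
       \<and> integrable M (\<lambda>\<omega>. (G_KL \<gamma> (A_KL A B C K L) Pbar xbar (\<lambda>k. w k \<omega>))^2)"
proof -
  interpret P: prob_space M by fact
  define A' where "A' = A_KL A B C K L"
  define cP where "cP = onorm (\<lambda>y. Pbar *v y)"
  define u where "u k \<omega> = norm (w k \<omega>)" for k \<omega>
  define g where "g k \<omega> = u k \<omega> * (norm xbar + u k \<omega> + (\<Sum>t<k. u t \<omega>))" for k \<omega>
  define a where "a k \<omega> = \<gamma>^k * g k \<omega>" for k \<omega>
  define D where "D = (norm xbar)^2 * (1 + \<sigma>4) + 2 * \<sigma>4"
  have cP0: "0 \<le> cP" unfolding cP_def by (rule onorm_pos_le) simp
  have Anorm: "spec_norm A' \<le> 1" using rho \<open>\<rho><1\<close> A'_def by simp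
  have mp: "norm (matpow A' j *v y) \<le> norm y" for j y by (rule matpow_norm_le[OF Anorm])
  have vs_meas: "(\<lambda>\<omega>. (v k \<omega>, s k \<omega>)) \<in> borel_measurable M" for k
    using iid_indep unfolding P.indep_vars_def by auto
  have lin: "linear (\<lambda>p::((real^'n) \<times> (real^'p)). vbar L (fst p) (snd p))"
    by (rule linearI) (auto simp: vbar_def vec_eq_iff 
          matrix_vector_right_distrib matrix_vector_mult_scaleR algebra_simps split: sum.splits)
  have cont: "continuous_on UNIV (\<lambda>p::((real^'n) \<times> (real^'p)). vbar L (fst p) (snd p))"
    using lin by (simp add: linear_continuous_on linear_conv_bounded_linear)
  have w_meas[measurable]: "w k \<in> borel_measurable M" for k
  proof -
    have "(\<lambda>p. vbar L (fst p) (snd p)) \<circ> (\<lambda>\<omega>. (v k \<omega>, s k \<omega>)) \<in> borel_measurable M"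
      by (rule measurable_comp[OF vs_meas borel_measurable_continuous_onI[OF cont]])
    thus ?thesis by (simp add: w_def o_def)
  qed
  have u_meas[measurable]: "u k \<in> borel_measurable M" for k
    unfolding u_def by measurable
  have u0: "0 \<le> u k \<omega>" for k \<omega> unfolding u_def by simp
  have u4_int: "integrable M (\<lambda>\<omega>. u k \<omega> ^ 4)" for k using fourth_int by (simp add: u_def)
  have u4_le: "P.expectation (\<lambda>\<omega>. u k \<omega> ^ 4) \<le> \<sigma>4" for k using fourth by (simp add: u_def)
  have s40: "0 \<le> \<sigma>4"
  proof -
    have "0 \<le> P.expectation (\<lambda>\<omega>. u 0 \<omega> ^ 4)" by (intro integral_nonneg_AE) (simp add: u0)
    thus ?thesis using u4_le[of 0] by linarith
  qed

  have g0: "0 \<le> g k \<omega>" for k \<omega> unfolding g_def using u0 by (auto intro!: mult_nonneg_nonneg add_nonneg_nonneg sum_nonneg)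
  have a0: "0 \<le> a k \<omega>" for k \<omega> unfolding a_def using g0 \<open>0<\<gamma>\<close> by simp
  have g_meas[measurable]: "g k \<in> borel_measurable M" for k unfolding g_def by measurable
  have a_meas[measurable]: "a k \<in> borel_measurable M" for k unfolding a_def by measurable
  have t1: "\<bar>\<gamma>^(k+1) * (w k \<omega> \<bullet> (Pbar *v (matpow A' (k+1) *v xbar)))\<bar> \<le> cP * a k \<omega>" for k \<omega>
    unfolding a_def
  proof (rule gamma_term_bound[OF \<open>0<\<gamma>\<close> \<open>\<gamma><1\<close>])
    have "\<bar>w k \<omega> \<bullet> (Pbar *v (matpow A' (k+1) *v xbar))\<bar> \<le> u k \<omega> * (cP * norm (matpow A' (k+1) *v xbar))"
      unfolding u_def cP_def by (rule inner_P_bound)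
    also have "\<dots> \<le> u k \<omega> * (cP * norm xbar)"
      using mp[of "k+1" xbar] cP0 u0 by (intro mult_left_mono) (simp_all del: matpow.simps)
    also have "\<dots> \<le> cP * g k \<omega>" unfolding g_def using cP0 u0
      by (simp add: algebra_simps mult_left_mono sum_nonneg mult_nonneg_nonneg)
    finally show "\<bar>w k \<omega> \<bullet> (Pbar *v (matpow A' (k+1) *v xbar))\<bar> \<le> cP * g k \<omega>" .
  qed
  have t2: "\<bar>\<gamma>^(k+1) * (w k \<omega> \<bullet> (Pbar *v w k \<omega>))\<bar> \<le> cP * a k \<omega>" for k \<omega>
    unfolding a_def
  proof (rule gamma_term_bound[OF \<open>0<\<gamma>\<close> \<open>\<gamma><1\<close>])
    have "\<bar>w k \<omega> \<bullet> (Pbar *v w k \<omega>)\<bar> \<le> u k \<omega> * (cP * u k \<omega>)"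
      unfolding u_def cP_def by (rule inner_P_bound)
    also have "\<dots> \<le> cP * g k \<omega>" unfolding g_def using cP0 u0
      by (simp add: algebra_simps mult_left_mono sum_nonneg mult_nonneg_nonneg)
    finally show "\<bar>w k \<omega> \<bullet> (Pbar *v w k \<omega>)\<bar> \<le> cP * g k \<omega>" .
  qed
  have t3: "\<bar>\<gamma>^(k+1) * (w k \<omega> \<bullet> (Pbar *v (\<Sum>\<tau><k. matpow A' (k - \<tau>) *v w \<tau> \<omega>)))\<bar> \<le> cP * a k \<omega>" for k \<omega>
    unfolding a_def
  proof (rule gamma_term_bound[OF \<open>0<\<gamma>\<close> \<open>\<gamma><1\<close>])
    have "\<bar>w k \<omega> \<bullet> (Pbar *v (\<Sum>\<tau><k. matpow A' (k - \<tau>) *v w \<tau> \<omega>))\<bar>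
       \<le> u k \<omega> * (cP * norm (\<Sum>\<tau><k. matpow A' (k - \<tau>) *v w \<tau> \<omega>))"
      unfolding u_def cP_def by (rule inner_P_bound)
    also have "norm (\<Sum>\<tau><k. matpow A' (k - \<tau>) *v w \<tau> \<omega>) \<le> (\<Sum>\<tau><k. u \<tau> \<omega>)"
    proof -
      have "norm (\<Sum>\<tau><k. matpow A' (k - \<tau>) *v w \<tau> \<omega>) \<le> (\<Sum>\<tau><k. norm (matpow A' (k - \<tau>) *v w \<tau> \<omega>))"
        by (rule norm_sum)
      also have "\<dots> \<le> (\<Sum>\<tau><k. u \<tau> \<omega>)" unfolding u_def by (intro sum_mono mp)
      finally show ?thesis .
    qed
    hence "u k \<omega> * (cP * norm (\<Sum>\<tau><k. matpow A' (k - \<tau>) *v w \<tau> \<omega>)) \<le> u k \<omega> * (cP * (\<Sum>\<tau><k. u \<tau> \<omega>))"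
      using cP0 u0 by (intro mult_left_mono) auto
    also have "\<dots> \<le> cP * g k \<omega>" unfolding g_def using cP0 u0
      by (simp add: algebra_simps mult_left_mono mult_nonneg_nonneg)
    finally show "\<bar>w k \<omega> \<bullet> (Pbar *v (\<Sum>\<tau><k. matpow A' (k - \<tau>) *v w \<tau> \<omega>))\<bar> \<le> cP * g k \<omega>" .
  qed
  define R where "R k \<omega> = (norm xbar)^2 + ((norm xbar)^2 + 1 + real k) * u k \<omega> ^ 4 + (\<Sum>t<k. u t \<omega> ^ 4)" for k \<omega>
  have R_int: "integrable M (R k)" for k
    unfolding R_def by (intro Bochner_Integration.integrable_add Bochner_Integration.integrable_sum integrable_mult_right u4_int) auto
  have R0: "0 \<le> R k \<omega>" for k \<omega> unfolding R_def by (auto intro!: add_nonneg_nonneg sum_nonneg)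
  have R_exp: "P.expectation (R k) \<le> (real k + 1) * D" for k
  proof -
    have "P.expectation (R k) = (norm xbar)^2 + ((norm xbar)^2 + 1 + real k) * P.expectation (\<lambda>\<omega>. u k \<omega> ^ 4)
          + (\<Sum>t<k. P.expectation (\<lambda>\<omega>. u t \<omega> ^ 4))"
    proof -
      have i0: "integrable M (\<lambda>\<omega>. (norm xbar)^2)" by simp
      have i1: "integrable M (\<lambda>\<omega>. ((norm xbar)^2 + 1 + real k) * u k \<omega> ^ 4)"
        by (intro integrable_mult_right u4_int)
      have i2: "integrable M (\<lambda>\<omega>. (\<Sum>t<k. u t \<omega> ^ 4))"
        by (intro Bochner_Integration.integrable_sum u4_int)
      show ?thesis unfolding R_def
        apply (subst Bochner_Integration.integral_add[OF Bochner_Integration.integrable_add[OF i0 i1] i2])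
        apply (subst Bochner_Integration.integral_add[OF i0 i1])
        apply (simp add: Bochner_Integration.integral_sum u4_int P.prob_space)
        done
    qed
    also have "\<dots> \<le> (norm xbar)^2 + ((norm xbar)^2 + 1 + real k) * \<sigma>4 + real k * \<sigma>4"
    proof -
      have "((norm xbar)^2 + 1 + real k) * P.expectation (\<lambda>\<omega>. u k \<omega> ^ 4) \<le> ((norm xbar)^2 + 1 + real k) * \<sigma>4"
        by (intro mult_left_mono u4_le) auto
      moreover have "(\<Sum>t<k. P.expectation (\<lambda>\<omega>. u t \<omega> ^ 4)) \<le> (\<Sum>t<k. \<sigma>4)" by (intro sum_mono u4_le)
      ultimately show ?thesis by simp
    qed
    also have "\<dots> \<le> (real k + 1) * D" unfolding D_def
    proof -
      have a: "0 \<le> real k * (norm xbar)^2 * \<sigma>4" "0 \<le> real k * (norm xbar)^2" "0 \<le> real k * \<sigma>4" "0 \<le> (norm xbar)^2 * \<sigma>4"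
        using s40 by auto
      show "(norm xbar)^2 + ((norm xbar)^2 + 1 + real k) * \<sigma>4 + real k * \<sigma>4 \<le> (real k + 1) * ((norm xbar)^2 * (1 + \<sigma>4) + 2 * \<sigma>4)"
        using a s40 by (simp add: algebra_simps)
    qed
    finally show ?thesis .
  qed
  have gR: "(g k \<omega>)^2 \<le> 3 * (real k + 1) * R k \<omega>" for k \<omega>
    unfolding g_def R_def using g_sq_bound[of "\<lambda>t. u t \<omega>" "norm xbar" k] u0 by simp
  have nnk: "(\<integral>\<^sup>+\<omega>. ennreal (\<gamma>^k * (g k \<omega>)^2) \<partial>M) \<le> ennreal (3 * D * (\<gamma>^k * (real k + 1)^2))" for k
  proof -
    have "(\<integral>\<^sup>+\<omega>. ennreal (\<gamma>^k * (g k \<omega>)^2) \<partial>M) \<le> (\<integral>\<^sup>+\<omega>. ennreal (\<gamma>^k * 3 * (real k + 1) * R k \<omega>) \<partial>M)"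
      using gR \<open>0<\<gamma>\<close> by (intro nn_integral_mono ennreal_leI) (simp add: mult.assoc mult_left_mono)
    also have "\<dots> = ennreal (P.expectation (\<lambda>\<omega>. \<gamma>^k * 3 * (real k + 1) * R k \<omega>))"
      using R_int R0 \<open>0<\<gamma>\<close> by (intro nn_integral_eq_integral) auto
    also have "\<dots> = ennreal (\<gamma>^k * 3 * (real k + 1) * P.expectation (R k))" by simp
    also have "\<dots> \<le> ennreal (\<gamma>^k * 3 * (real k + 1) * ((real k + 1) * D))"
      using R_exp \<open>0<\<gamma>\<close> by (intro ennreal_leI mult_left_mono) auto
    also have "\<dots> = ennreal (3 * D * (\<gamma>^k * (real k + 1)^2))" by (simp add: power2_eq_square algebra_simps)
    finally show ?thesis .
  qed
  define q where "q \<omega> = (\<Sum>k. ennreal (\<gamma>^k * (g k \<omega>)^2))" for \<omega>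
  have q_meas[measurable]: "q \<in> borel_measurable M" unfolding q_def by measurable
  have D0: "0 \<le> D" unfolding D_def using s40 by auto
  have sumpg: "summable (\<lambda>k. 3 * D * (\<gamma>^k * (real k + 1)^2))"
    by (intro summable_mult summable_poly_geom) (use \<open>0<\<gamma>\<close> \<open>\<gamma><1\<close> in auto)
  have q_fin: "(\<integral>\<^sup>+\<omega>. q \<omega> \<partial>M) \<noteq> \<infinity>"
  proof -
    have "(\<integral>\<^sup>+\<omega>. q \<omega> \<partial>M) = (\<Sum>k. \<integral>\<^sup>+\<omega>. ennreal (\<gamma>^k * (g k \<omega>)^2) \<partial>M)"
      unfolding q_def by (intro nn_integral_suminf) measurable
    also have "\<dots> \<le> (\<Sum>k. ennreal (3 * D * (\<gamma>^k * (real k + 1)^2)))"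
      by (intro suminf_le nnk) auto
    also have "\<dots> = ennreal (\<Sum>k. 3 * D * (\<gamma>^k * (real k + 1)^2))"
      using D0 \<open>0<\<gamma>\<close> sumpg by (intro suminf_ennreal2) auto
    finally show ?thesis by (auto simp: top_unique)
  qed
  have AEq: "AE \<omega> in M. q \<omega> \<noteq> \<infinity>" by (rule nn_integral_PInf_AE[OF q_meas q_fin])
  define H where "H \<omega> = (\<Sum>k. a k \<omega>)" for \<omega>
  have H_meas[measurable]: "H \<in> borel_measurable M" unfolding H_def by measurable
  have good: "summable (\<lambda>k. a k \<omega>) \<and> ennreal ((H \<omega>)^2) \<le> ennreal (1/(1-\<gamma>)) * q \<omega>" if qf: "q \<omega> \<noteq> \<infinity>" for \<omega>
  proof -
    have gs: "summable (\<lambda>k. \<gamma>^k * (g k \<omega>)^2)"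
      using qf \<open>0<\<gamma>\<close> by (intro summable_suminf_not_top) (auto simp: q_def)
    define Qv where "Qv = (\<Sum>k. \<gamma>^k * (g k \<omega>)^2)"
    have Qv0: "0 \<le> Qv" unfolding Qv_def using \<open>0<\<gamma>\<close> by (intro suminf_nonneg gs) auto
    have qQ: "q \<omega> = ennreal Qv" unfolding q_def Qv_def using gs \<open>0<\<gamma>\<close> by (intro suminf_ennreal2) auto
    have pb: "(\<Sum>k<n. a k \<omega>)^2 \<le> Qv / (1-\<gamma>)" for n
    proof -
      have "(\<Sum>k<n. a k \<omega>)^2 \<le> (\<Sum>k<n. \<gamma>^k) * (\<Sum>k<n. \<gamma>^k * (g k \<omega>)^2)"
        unfolding a_def by (rule finite_CS_geom[OF \<open>0<\<gamma>\<close>])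
      also have "\<dots> \<le> (1/(1-\<gamma>)) * Qv"
      proof (rule mult_mono)
        show "(\<Sum>k<n. \<gamma>^k) \<le> 1/(1-\<gamma>)" by (rule geom_partial_le[OF \<open>0<\<gamma>\<close> \<open>\<gamma><1\<close>])
        show "(\<Sum>k<n. \<gamma>^k * (g k \<omega>)^2) \<le> Qv" unfolding Qv_def using gs \<open>0<\<gamma>\<close>
          by (intro sum_le_suminf) auto
        show "0 \<le> 1/(1-\<gamma>)" using \<open>\<gamma><1\<close> by simp
        show "0 \<le> (\<Sum>k<n. \<gamma>^k * (g k \<omega>)^2)" using \<open>0<\<gamma>\<close> by (intro sum_nonneg) auto
      qed
      finally show ?thesis by simp
    qed
    have pb2: "(\<Sum>k<n. a k \<omega>) \<le> sqrt (Qv / (1-\<gamma>))" for n by (rule real_le_rsqrt[OF pb])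
    have sa: "summable (\<lambda>k. a k \<omega>)"
    proof (rule bounded_imp_summable)
      show "0 \<le> a n \<omega>" for n by (rule a0)
      show "(\<Sum>k\<le>n. a k \<omega>) \<le> sqrt (Qv / (1-\<gamma>))" for n
        using pb2[of "Suc n"] by (simp add: lessThan_Suc_atMost)
    qed
    have H0: "0 \<le> H \<omega>" unfolding H_def by (intro suminf_nonneg sa a0)
    have "H \<omega> \<le> sqrt (Qv / (1-\<gamma>))" unfolding H_def by (intro suminf_le_const sa pb2)
    hence "(H \<omega>)^2 \<le> (sqrt (Qv / (1-\<gamma>)))^2" using H0 by (intro power_mono) auto
    also have "\<dots> = Qv / (1-\<gamma>)" using Qv0 \<open>\<gamma><1\<close> by simp
    finally have "(H \<omega>)^2 \<le> (1/(1-\<gamma>)) * Qv" by simp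
    hence "ennreal ((H \<omega>)^2) \<le> ennreal ((1/(1-\<gamma>)) * Qv)" by (rule ennreal_leI)
    also have "\<dots> = ennreal (1/(1-\<gamma>)) * q \<omega>" unfolding qQ using Qv0 \<open>\<gamma><1\<close> by (subst ennreal_mult[symmetric]) auto
    finally show ?thesis using sa by simp
  qed
  have AEgood: "AE \<omega> in M. summable (\<lambda>k. a k \<omega>) \<and> ennreal ((H \<omega>)^2) \<le> ennreal (1/(1-\<gamma>)) * q \<omega>"
    using AEq by eventually_elim (rule good)
  have H2_int: "integrable M (\<lambda>\<omega>. (H \<omega>)^2)"
  proof (rule integrableI_bounded)
    show "(\<lambda>\<omega>. (H \<omega>)^2) \<in> borel_measurable M" by measurable
    have "(\<integral>\<^sup>+\<omega>. ennreal (norm ((H \<omega>)^2)) \<partial>M) \<le> (\<integral>\<^sup>+\<omega>. ennreal (1/(1-\<gamma>)) * q \<omega> \<partial>M)"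
      using AEgood by (intro nn_integral_mono_AE) (auto elim!: eventually_mono)
    also have "\<dots> = ennreal (1/(1-\<gamma>)) * (\<integral>\<^sup>+\<omega>. q \<omega> \<partial>M)" by (rule nn_integral_cmult) measurable
    also have "\<dots> < \<infinity>" using q_fin by (simp add: ennreal_mult_less_top less_top)
    finally show "(\<integral>\<^sup>+\<omega>. ennreal (norm ((H \<omega>)^2)) \<partial>M) < \<infinity>" .
  qed

  define T1 where "T1 k \<omega> = \<gamma>^(k+1) * (w k \<omega> \<bullet> (Pbar *v (matpow A' (k+1) *v xbar)))" for k \<omega>
  define T2 where "T2 k \<omega> = \<gamma>^(k+1) * (w k \<omega> \<bullet> (Pbar *v w k \<omega>))" for k \<omega>
  define T3 where "T3 k \<omega> = \<gamma>^(k+1) * (w k \<omega> \<bullet> (Pbar *v (\<Sum>\<tau><k. matpow A' (k - \<tau>) *v w \<tau> \<omega>)))" for k \<omega>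
  define G where "G \<omega> = G_KL \<gamma> A' Pbar xbar (\<lambda>k. w k \<omega>)" for \<omega>
  define c0 where "c0 = xbar \<bullet> (Pbar *v xbar)"
  have G_meas[measurable]: "G \<in> borel_measurable M" unfolding G_def G_KL_def by measurable
  have Geq: "G \<omega> = c0 + 2 * (\<Sum>k. T1 k \<omega>) + (\<Sum>k. T2 k \<omega>) + 2 * (\<Sum>k. T3 k \<omega>)" for \<omega>
    unfolding G_def G_KL_def c0_def T1_def T2_def T3_def by simp
  have sb: "summable (\<lambda>k. T \<omega> k) \<and> \<bar>\<Sum>k. T \<omega> k\<bar> \<le> cP * H \<omega>"
    if sa: "summable (\<lambda>k. a k \<omega>)" and bd: "\<And>k. \<bar>T \<omega> k\<bar> \<le> cP * a k \<omega>" for T \<omega>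
  proof -
    have sca: "summable (\<lambda>k. cP * a k \<omega>)" by (rule summable_mult[OF sa])
    have sn: "summable (\<lambda>k. norm (T \<omega> k))"
      by (rule summable_comparison_test'[OF sca]) (simp add: bd)
    have "\<bar>\<Sum>k. T \<omega> k\<bar> = norm (\<Sum>k. T \<omega> k)" by simp
    also have "\<dots> \<le> (\<Sum>k. norm (T \<omega> k))" by (rule summable_norm[OF sn])
    also have "\<dots> \<le> (\<Sum>k. cP * a k \<omega>)" by (rule suminf_le) (use bd sn sca in auto)
    also have "\<dots> = cP * H \<omega>" unfolding H_def by (rule suminf_mult[OF sa])
    finally show ?thesis using summable_norm_cancel[OF sn] by simp
  qed
  have key: "summable (\<lambda>k. T1 k \<omega>) \<and> summable (\<lambda>k. T2 k \<omega>) \<and> summable (\<lambda>k. T3 k \<omega>)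
      \<and> \<bar>G \<omega>\<bar> \<le> \<bar>c0\<bar> + 5 * (cP * H \<omega>)" if sa: "summable (\<lambda>k. a k \<omega>)" for \<omega>
  proof -
    have r1: "summable (\<lambda>k. T1 k \<omega>) \<and> \<bar>\<Sum>k. T1 k \<omega>\<bar> \<le> cP * H \<omega>"
    proof -
      have "\<And>k. \<bar>T1 k \<omega>\<bar> \<le> cP * a k \<omega>" unfolding T1_def by (rule t1)
      from sb[of \<omega> "\<lambda>\<omega> k. T1 k \<omega>", OF sa this] show ?thesis .
    qed
    have r2: "summable (\<lambda>k. T2 k \<omega>) \<and> \<bar>\<Sum>k. T2 k \<omega>\<bar> \<le> cP * H \<omega>"
    proof -
      have "\<And>k. \<bar>T2 k \<omega>\<bar> \<le> cP * a k \<omega>" unfolding T2_def by (rule t2)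
      from sb[of \<omega> "\<lambda>\<omega> k. T2 k \<omega>", OF sa this] show ?thesis .
    qed
    have r3: "summable (\<lambda>k. T3 k \<omega>) \<and> \<bar>\<Sum>k. T3 k \<omega>\<bar> \<le> cP * H \<omega>"
    proof -
      have "\<And>k. \<bar>T3 k \<omega>\<bar> \<le> cP * a k \<omega>" unfolding T3_def by (rule t3)
      from sb[of \<omega> "\<lambda>\<omega> k. T3 k \<omega>", OF sa this] show ?thesis .
    qed
    have "\<bar>G \<omega>\<bar> \<le> \<bar>c0\<bar> + 2 * \<bar>\<Sum>k. T1 k \<omega>\<bar> + \<bar>\<Sum>k. T2 k \<omega>\<bar> + 2 * \<bar>\<Sum>k. T3 k \<omega>\<bar>"
      unfolding Geq by linarith
    thus ?thesis using r1 r2 r3 by linarith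
  qed
  have AEkey: "AE \<omega> in M. summable (\<lambda>k. T1 k \<omega>) \<and> summable (\<lambda>k. T2 k \<omega>) \<and> summable (\<lambda>k. T3 k \<omega>)
      \<and> \<bar>G \<omega>\<bar> \<le> \<bar>c0\<bar> + 5 * (cP * H \<omega>)"
    using AEgood by eventually_elim (intro key, blast)
  have H0: "AE \<omega> in M. 0 \<le> H \<omega>"
    using AEgood by eventually_elim (unfold H_def, intro suminf_nonneg, auto intro: a0)
  have G2_int: "integrable M (\<lambda>\<omega>. (G \<omega>)^2)"
  proof (rule Bochner_Integration.integrable_bound[where f="\<lambda>\<omega>. 2 * c0^2 + 50 * cP^2 * (H \<omega>)^2"])
    show "integrable M (\<lambda>\<omega>. 2 * c0^2 + 50 * cP^2 * (H \<omega>)^2)"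
      using H2_int by (intro Bochner_Integration.integrable_add integrable_mult_right) auto
    show "(\<lambda>\<omega>. (G \<omega>)^2) \<in> borel_measurable M" by measurable
    show "AE \<omega> in M. norm ((G \<omega>)^2) \<le> norm (2 * c0^2 + 50 * cP^2 * (H \<omega>)^2)"
      using AEkey H0
    proof eventually_elim
      case (elim \<omega>)
      hence b: "\<bar>G \<omega>\<bar> \<le> \<bar>c0\<bar> + 5 * (cP * H \<omega>)" and h: "0 \<le> H \<omega>" by auto
      have nn: "0 \<le> 5 * (cP * H \<omega>)" using h cP0 by simp
      have "(G \<omega>)^2 = \<bar>G \<omega>\<bar>^2" by simp
      also have "\<dots> \<le> (\<bar>c0\<bar> + 5 * (cP * H \<omega>))^2" using b by (intro power_mono) auto
      also have "\<dots> \<le> 2 * \<bar>c0\<bar>^2 + 2 * (5 * (cP * H \<omega>))^2"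
      proof -
        have "0 \<le> (\<bar>c0\<bar> - 5 * (cP * H \<omega>))^2" by simp
        thus ?thesis by (simp add: power2_sum power2_diff)
      qed
      also have "\<dots> = 2 * c0^2 + 50 * cP^2 * (H \<omega>)^2" by (simp add: power_mult_distrib)
      finally have "(G \<omega>)^2 \<le> 2 * c0^2 + 50 * cP^2 * (H \<omega>)^2" .
      moreover have "0 \<le> 2 * c0^2 + 50 * cP^2 * (H \<omega>)^2" by simp
      ultimately show ?case by simp
    qed
  qed
  have G_int: "integrable M G"
  proof (rule Bochner_Integration.integrable_bound[where f="\<lambda>\<omega>. 1 + (G \<omega>)^2"])
    show "integrable M (\<lambda>\<omega>. 1 + (G \<omega>)^2)" using G2_int by simp
    show "G \<in> borel_measurable M" by measurable
    show "AE \<omega> in M. norm (G \<omega>) \<le> norm (1 + (G \<omega>)^2)"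
      using abs_le_one_plus_sq by (auto intro!: always_eventually)
  qed
  have AEfinal: "AE \<omega> in M. summable (\<lambda>k. T1 k \<omega>) \<and> summable (\<lambda>k. T2 k \<omega>) \<and> summable (\<lambda>k. T3 k \<omega>)"
    using AEkey by eventually_elim blast
  show ?thesis
    using AEfinal G_int G2_int unfolding T1_def T2_def T3_def G_def A'_def by blast
qed

end
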